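(* Let $\mathbf{S}$ be any one of the four systems $\mathbf{G3N}$, $\mathbf{G3NeF}$, $\mathbf{G3CoPC}$, $\mathbf{G3MPC}$. Let $\Gamma,\Delta$ be finite multisets of formulas and $\varphi$ a formula such that the common language of $\Gamma$ and $\Delta,\varphi$ is non-empty. If $\Gamma,\Delta\Rightarrow\varphi$ is derivable in $\mathbf{S}$, then there exists a formula $\sigma$ such that (1) every propositional variable occurring in $\sigma$ belongs to the common language of $\Gamma$ and $\Delta,\varphi$, and (2) both $\Gamma\Rightarrow\sigma$ and $\Delta,\sigma\Rightarrow\varphi$ are derivable in $\mathbf{S}$.
   Context: Formulas are generated from a countable set of propositional variables $p,q,\dots$ and the constant $\top$ by the grammar $\varphi::= p\mid\top\mid\varphi\wedge\varphi\mid\varphi\vee\varphi\mid\varphi\to\varphi\mid\neg\varphi$ (there is no constant $\bot$). $\varphi\leftrightarrow\psi$ abbreviates $(\varphi\to\psi)\wedge(\psi\to\varphi)$. A sequent is an expression $\Gamma\Rightarrow\varphi$ where $\Gamma$ is a finite multiset of formulas and $\varphi$ is a formula (the goal); $\Gamma,\Delta$ denotes multiset union and $\Gamma,\alpha$ denotes $\Gamma$ with one more occurrence of $\alpha$. Rules ($p$ a propositional variable): (ax) $\Gamma,p\Rightarrow p$ (no premises); ($\top$) $\Gamma\Rightarrow\top$ (no premises); ($\to$r) from $\Gamma,\alpha\Rightarrow\beta$ infer $\Gamma\Rightarrow\alpha\to\beta$; ($\to$l) from $\Gamma,\alpha\to\beta\Rightarrow\alpha$ and $\Gamma,\beta\Rightarrow\varphi$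 infer $\Gamma,\alpha\to\beta\Rightarrow\varphi$; ($\wedge$r) from $\Gamma\Rightarrow\alpha$ and $\Gamma\Rightarrow\beta$ infer $\Gamma\Rightarrow\alpha\wedge\beta$; ($\wedge$l) from $\Gamma,\alpha,\beta\Rightarrow\varphi$ infer $\Gamma,\alpha\wedge\beta\Rightarrow\varphi$; ($\vee$r$_1$), ($\vee$r$_2$) from $\Gamma\Rightarrow\alpha$ (resp. $\Gamma\Rightarrow\beta$) infer $\Gamma\Rightarrow\alpha\vee\beta$; ($\vee$l) from $\Gamma,\alpha\Rightarrow\varphi$ and $\Gamma,\beta\Rightarrow\varphi$ infer $\Gamma,\alpha\vee\beta\Rightarrow\varphi$; (n) from $\Gamma,\neg\alpha,\beta\Rightarrow\alpha$ and $\Gamma,\neg\alpha,\alpha\Rightarrow\beta$ infer $\Gamma,\neg\alpha\Rightarrow\neg\beta$; (nef) from $\Gamma,\neg\alpha\Rightarrow\alpha$ infer $\Gamma,\neg\alpha\Rightarrow\neg\beta$; (copc) from $\Gamma,\neg\alpha,\beta\Rightarrow\alpha$ infer $\Gamma,\neg\alpha\Rightarrow\neg\beta$; (an) from $\Gamma,\alpha\Rightarrow\neg\alpha$ infer $\Gamma\Rightarrow\neg\alpha$. The rules (ax) through ($\vee$l) are the positive rules. The four systems are: $\mathbf{G3N}$ = positive rules + (n); $\mathbf{G3NeF}$ = positive rules + (n) + (nef); $\mathbf{G3CoPC}$ = positive rules + (copc); $\mathbf{G3MPC}$ = positive rules + (copc) + (an). None of them contains weakening, contraction or cut as a rule. A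 derivation is a finite tree of rule instances with leaves instances of (ax) or ($\top$); its height is the number of inference steps on a longest branch. A sequent is derivable if it has a derivation; a formula $\varphi$ is a theorem if $\Rightarrow\varphi$ (empty antecedent) is derivable. The common language of two multisets of formulas $\Gamma$ and $\Delta'$ is the set of propositional variables that occur both in some formula of $\Gamma$ and in some formula of $\Delta'$; here $\Delta'$ is $\Delta$ together with $\varphi$. *)

theory Defs
  imports Main "HOL-Library.Multiset"
begin

datatype fm = Var nat | Top | And fm fm | Or fm fm | Imp fm fm | Neg fm

fun vars :: "fm \<Rightarrow> nat set" where
  "vars (Var p) = {p}"
| "vars Top = {}"
| "vars (And a b) = vars a \<union> vars b"
| "vars (Or a b) = vars a \<union> vars b"
| "vars (Imp a b) = vars a \<union> vars b"
| "vars (Neg a) = vars a"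

definition mvars :: "fm multiset \<Rightarrow> nat set" where
  "mvars G = (\<Union>a\<in>set_mset G. vars a)"

definition common_lang :: "fm multiset \<Rightarrow> fm multiset \<Rightarrow> fm \<Rightarrow> nat set" where
  "common_lang G D phi = mvars G \<inter> mvars (add_mset phi D)"

datatype sys = G3N | G3NeF | G3CoPC | G3MPC

definition has_n :: "sys \<Rightarrow> bool" where "has_n S \<longleftrightarrow> S = G3N \<or> S = G3NeF"
definition has_nef :: "sys \<Rightarrow> bool" where "has_nef S \<longleftrightarrow> S = G3NeF"
definition has_copc :: "sys \<Rightarrow> bool" where "has_copc S \<longleftrightarrow> S = G3CoPC \<or> S = G3MPC"
definition has_an :: "sys \<Rightarrow> bool" where "has_an S \<longleftrightarrow> S = G3MPC"

inductive deriv :: "sys \<Rightarrow> fm multiset \<Rightarrow> fm \<Rightarrow> bool" for S where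
  ax: "deriv S (add_mset (Var p) G) (Var p)"
| top: "deriv S G Top"
| impR: "deriv S (add_mset a G) b \<Longrightarrow> deriv S G (Imp a b)"
| impL: "deriv S (add_mset (Imp a b) G) a \<Longrightarrow> deriv S (add_mset b G) phi
         \<Longrightarrow> deriv S (add_mset (Imp a b) G) phi"
| andR: "deriv S G a \<Longrightarrow> deriv S G b \<Longrightarrow> deriv S G (And a b)"
| andL: "deriv S (add_mset a (add_mset b G)) phi \<Longrightarrow> deriv S (add_mset (And a b) G) phi"
| orR1: "deriv S G a \<Longrightarrow> deriv S G (Or a b)"
| orR2: "deriv S G b \<Longrightarrow> deriv S G (Or a b)"
| orL: "deriv S (add_mset a G) phi \<Longrightarrow> deriv S (add_mset b G) phi
        \<Longrightarrow> deriv S (add_mset (Or a b) G) phi"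
| n: "has_n S \<Longrightarrow> deriv S (add_mset (Neg a) (add_mset b G)) a
      \<Longrightarrow> deriv S (add_mset (Neg a) (add_mset a G)) b
      \<Longrightarrow> deriv S (add_mset (Neg a) G) (Neg b)"
| nef: "has_nef S \<Longrightarrow> deriv S (add_mset (Neg a) G) a
      \<Longrightarrow> deriv S (add_mset (Neg a) G) (Neg b)"
| copc: "has_copc S \<Longrightarrow> deriv S (add_mset (Neg a) (add_mset b G)) a
      \<Longrightarrow> deriv S (add_mset (Neg a) G) (Neg b)"
| an: "has_an S \<Longrightarrow> deriv S (add_mset a G) (Neg a) \<Longrightarrow> deriv S G (Neg a)"

end

theory Submission
  imports Defs
begin

lemma wk: "deriv S G C \<Longrightarrow> deriv S (G + H) C"
  by (induction rule: deriv.induct) (auto intro: deriv.intros)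

lemma wk1: "deriv S G C \<Longrightarrow> deriv S (add_mset x G) C"
  using wk[of S G C "{#x#}"] by simp

lemma dm: "y \<in># M \<Longrightarrow> add_mset x M - {#y#} = add_mset x (M - {#y#})"
  by (rule diff_union_swap2)

lemma ax_m: "Var p \<in># M \<Longrightarrow> deriv S M (Var p)"
  by (metis deriv.ax insert_DiffM)
lemma impL_m: "Imp a b \<in># M \<Longrightarrow> deriv S M a \<Longrightarrow> deriv S (add_mset b (M - {#Imp a b#})) phi \<Longrightarrow> deriv S M phi"
  by (metis deriv.impL insert_DiffM)
lemma andL_m: "And a b \<in># M \<Longrightarrow> deriv S (add_mset a (add_mset b (M - {#And a b#}))) phi \<Longrightarrow> deriv S M phi"
  by (metis deriv.andL insert_DiffM)
lemma orL_m: "Or a b \<in># M \<Longrightarrow> deriv S (add_mset a (M - {#Or a b#})) phi \<Longrightarrow> deriv S (add_mset b (M - {#Or a b#})) phi \<Longrightarrow> deriv S M phi"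
  by (metis deriv.orL insert_DiffM)
lemma n_m: "Neg a \<in># M \<Longrightarrow> has_n S \<Longrightarrow> deriv S (add_mset b M) a \<Longrightarrow> deriv S (add_mset a M) b \<Longrightarrow> deriv S M (Neg b)"
proof -
  assume a: "Neg a \<in># M" "has_n S" "deriv S (add_mset b M) a" "deriv S (add_mset a M) b"
  obtain K where M: "M = add_mset (Neg a) K" using a(1) by (metis insert_DiffM)
  have e1: "add_mset b M = add_mset (Neg a) (add_mset b K)" "add_mset a M = add_mset (Neg a) (add_mset a K)"
    by (simp_all add: M add_mset_commute)
  have 1: "deriv S (add_mset (Neg a) (add_mset b K)) a" using a(3) unfolding e1(1) .
  have 2: "deriv S (add_mset (Neg a) (add_mset a K)) b" using a(4) unfolding e1(2) .
  show ?thesis unfolding M by (rule deriv.n[OF a(2) 1 2])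
qed
lemma nef_m: "Neg a \<in># M \<Longrightarrow> has_nef S \<Longrightarrow> deriv S M a \<Longrightarrow> deriv S M (Neg b)"
  by (metis deriv.nef insert_DiffM)
lemma copc_m: "Neg a \<in># M \<Longrightarrow> has_copc S \<Longrightarrow> deriv S (add_mset b M) a \<Longrightarrow> deriv S M (Neg b)"
proof -
  assume a: "Neg a \<in># M" "has_copc S" "deriv S (add_mset b M) a"
  obtain K where M: "M = add_mset (Neg a) K" using a(1) by (metis insert_DiffM)
  have e1: "add_mset b M = add_mset (Neg a) (add_mset b K)"
    by (simp_all add: M add_mset_commute)
  have 1: "deriv S (add_mset (Neg a) (add_mset b K)) a" using a(3) unfolding e1(1) .
  show ?thesis unfolding M by (rule deriv.copc[OF a(2) 1])
qed

lemma inv_imp: "deriv S M C \<Longrightarrow> Imp a b \<in># M \<Longrightarrow> deriv S (add_mset b (M - {#Imp a b#})) C"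
proof (induction rule: deriv.induct)
  case (ax p G)
  then show ?case by (auto intro: ax_m)
next
  case (top G)
  then show ?case by (auto intro: deriv.top)
next
  case (impR x G y)
  have m: "Imp a b \<in># G" using impR.prems by simp
  have "deriv S (add_mset b (add_mset x G - {#Imp a b#})) y" using impR.IH m by simp
  then have "deriv S (add_mset x (add_mset b (G - {#Imp a b#}))) y" by (simp add: m add_mset_commute)
  then show ?case by (rule deriv.impR)
next
  case (impL x y G phi)
  show ?case
  proof (cases "Imp x y = Imp a b")
    case True then show ?thesis using impL by auto
  next
    case False
    have m: "Imp a b \<in># G" using impL False by auto
    have 1: "deriv S (add_mset b (add_mset (Imp x y) G - {#Imp a b#})) x" using impL.IH(1) m by simp
    have 2: "deriv S (add_mset b (add_mset y G - {#Imp a b#})) phi" using impL.IH(2) m by simp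
    show ?thesis
      apply (rule impL_m[of x y])
      using 1 2 False by (simp_all add: m add_mset_commute)
  qed
next
  case (andR G x y)
  then show ?case by (auto intro: deriv.andR)
next
  case (andL x y G phi)
  have False: "And x y \<noteq> Imp a b" by simp
  have m: "Imp a b \<in># G" using andL False by auto
  have 1: "deriv S (add_mset b (add_mset x (add_mset y G) - {#Imp a b#})) phi" using andL.IH m by simp
  show ?case
      apply (rule andL_m[of x y])
      using 1 False by (simp_all add: m add_mset_commute)
next
  case (orR1 G x y)
  then show ?case by (auto intro: deriv.orR1)
next
  case (orR2 G x y)
  then show ?case by (auto intro: deriv.orR2)
next
  case (orL x G phi y)
  have False: "Or x y \<noteq> Imp a b" by simp
  have m: "Imp a b \<in># G" using orL False by auto
  have 1: "deriv S (add_mset b (add_mset x G - {#Imp a b#})) phi" using orL.IH m by simp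
  have 2: "deriv S (add_mset b (add_mset y G - {#Imp a b#})) phi" using orL.IH m by simp
  show ?case
      apply (rule orL_m[of x y])
      using 1 2 False by (simp_all add: m add_mset_commute)
next
  case (n x y G)
  have m: "Imp a b \<in># G" using n by auto
  have 1: "deriv S (add_mset b (add_mset (Neg x) (add_mset y G) - {#Imp a b#})) x" using n.IH m by simp
  have 2: "deriv S (add_mset b (add_mset (Neg x) (add_mset x G) - {#Imp a b#})) y" using n.IH m by simp
  show ?case
      apply (rule n_m[of x])
      using 1 2 n.hyps by (simp_all add: m add_mset_commute)
next
  case (nef x G y)
  have m: "Imp a b \<in># G" using nef by auto
  have 1: "deriv S (add_mset b (add_mset (Neg x) G - {#Imp a b#})) x" using nef.IH m by simp
  show ?case
      apply (rule nef_m[of x])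
      using 1 nef.hyps by (simp_all add: m add_mset_commute)
next
  case (copc x y G)
  have m: "Imp a b \<in># G" using copc by auto
  have 1: "deriv S (add_mset b (add_mset (Neg x) (add_mset y G) - {#Imp a b#})) x" using copc.IH m by simp
  show ?case
      apply (rule copc_m[of x])
      using 1 copc.hyps by (simp_all add: m add_mset_commute)
next
  case (an x G)
  have m: "Imp a b \<in># G" using an.prems by simp
  have "deriv S (add_mset b (add_mset x G - {#Imp a b#})) (Neg x)" using an.IH m by simp
  then have "deriv S (add_mset x (add_mset b (G - {#Imp a b#}))) (Neg x)" by (simp add: m add_mset_commute)
  then show ?case using an.hyps by (rule_tac deriv.an)
qed

lemma inv_and: "deriv S M C \<Longrightarrow> And a b \<in># M \<Longrightarrow> deriv S (add_mset a (add_mset b (M - {#And a b#}))) C"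
proof (induction rule: deriv.induct)
  case (ax p G)
  then show ?case by (auto intro: ax_m)
next
  case (top G)
  then show ?case by (auto intro: deriv.top)
next
  case (impR x G y)
  have m: "And a b \<in># G" using impR.prems by simp
  have "deriv S (add_mset a (add_mset b (add_mset x G - {#And a b#}))) y" using impR.IH m by simp
  then have "deriv S (add_mset x (add_mset a (add_mset b (G - {#And a b#})))) y" by (simp add: m add_mset_commute)
  then show ?case by (rule deriv.impR)
next
  case (impL x y G phi)
  have False: "Imp x y \<noteq> And a b" by simp
  have m: "And a b \<in># G" using impL False by auto
    have 1: "deriv S (add_mset a (add_mset b (add_mset (Imp x y) G - {#And a b#}))) x" using impL.IH(1) m by simp
    have 2: "deriv S (add_mset a (add_mset b (add_mset y G - {#And a b#}))) phi" using impL.IH(2) m by simp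
    show ?case
      apply (rule impL_m[of x y])
      using 1 2 False by (simp_all add: m add_mset_commute)
next
  case (andR G x y)
  then show ?case by (auto intro: deriv.andR)
next
  case (andL x y G phi)
  show ?case
  proof (cases "And x y = And a b")
    case True then show ?thesis using andL by auto
  next
    case False
    have m: "And a b \<in># G" using andL False by auto
  have 1: "deriv S (add_mset a (add_mset b (add_mset x (add_mset y G) - {#And a b#}))) phi" using andL.IH m by simp
  show ?thesis
      apply (rule andL_m[of x y])
      using 1 False by (simp_all add: m add_mset_commute)
  qed
next
  case (orR1 G x y)
  then show ?case by (auto intro: deriv.orR1)
next
  case (orR2 G x y)
  then show ?case by (auto intro: deriv.orR2)
next
  case (orL x G phi y)
  have False: "Or x y \<noteq> And a b" by simp
  have m: "And a b \<in># G" using orL False by auto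
  have 1: "deriv S (add_mset a (add_mset b (add_mset x G - {#And a b#}))) phi" using orL.IH m by simp
  have 2: "deriv S (add_mset a (add_mset b (add_mset y G - {#And a b#}))) phi" using orL.IH m by simp
  show ?case
      apply (rule orL_m[of x y])
      using 1 2 False by (simp_all add: m add_mset_commute)
next
  case (n x y G)
  have m: "And a b \<in># G" using n by auto
  have 1: "deriv S (add_mset a (add_mset b (add_mset (Neg x) (add_mset y G) - {#And a b#}))) x" using n.IH m by simp
  have 2: "deriv S (add_mset a (add_mset b (add_mset (Neg x) (add_mset x G) - {#And a b#}))) y" using n.IH m by simp
  show ?case
      apply (rule n_m[of x])
      using 1 2 n.hyps by (simp_all add: m add_mset_commute)
next
  case (nef x G y)
  have m: "And a b \<in># G" using nef by auto
  have 1: "deriv S (add_mset a (add_mset b (add_mset (Neg x) G - {#And a b#}))) x" using nef.IH m by simp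
  show ?case
      apply (rule nef_m[of x])
      using 1 nef.hyps by (simp_all add: m add_mset_commute)
next
  case (copc x y G)
  have m: "And a b \<in># G" using copc by auto
  have 1: "deriv S (add_mset a (add_mset b (add_mset (Neg x) (add_mset y G) - {#And a b#}))) x" using copc.IH m by simp
  show ?case
      apply (rule copc_m[of x])
      using 1 copc.hyps by (simp_all add: m add_mset_commute)
next
  case (an x G)
  have m: "And a b \<in># G" using an.prems by simp
  have "deriv S (add_mset a (add_mset b (add_mset x G - {#And a b#}))) (Neg x)" using an.IH m by simp
  then have "deriv S (add_mset x (add_mset a (add_mset b (G - {#And a b#})))) (Neg x)" by (simp add: m add_mset_commute)
  then show ?case using an.hyps by (rule_tac deriv.an)
qed

lemma inv_or1: "deriv S M C \<Longrightarrow> Or a b \<in># M \<Longrightarrow> deriv S (add_mset a (M - {#Or a b#})) C"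
proof (induction rule: deriv.induct)
  case (ax p G)
  then show ?case by (auto intro: ax_m)
next
  case (top G)
  then show ?case by (auto intro: deriv.top)
next
  case (impR x G y)
  have m: "Or a b \<in># G" using impR.prems by simp
  have "deriv S (add_mset a (add_mset x G - {#Or a b#})) y" using impR.IH m by simp
  then have "deriv S (add_mset x (add_mset a (G - {#Or a b#}))) y" by (simp add: m add_mset_commute)
  then show ?case by (rule deriv.impR)
next
  case (impL x y G phi)
  have False: "Imp x y \<noteq> Or a b" by simp
  have m: "Or a b \<in># G" using impL False by auto
    have 1: "deriv S (add_mset a (add_mset (Imp x y) G - {#Or a b#})) x" using impL.IH(1) m by simp
    have 2: "deriv S (add_mset a (add_mset y G - {#Or a b#})) phi" using impL.IH(2) m by simp
    show ?case
      apply (rule impL_m[of x y])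
      using 1 2 False by (simp_all add: m add_mset_commute)
next
  case (andR G x y)
  then show ?case by (auto intro: deriv.andR)
next
  case (andL x y G phi)
  have False: "And x y \<noteq> Or a b" by simp
  have m: "Or a b \<in># G" using andL False by auto
  have 1: "deriv S (add_mset a (add_mset x (add_mset y G) - {#Or a b#})) phi" using andL.IH m by simp
  show ?case
      apply (rule andL_m[of x y])
      using 1 False by (simp_all add: m add_mset_commute)
next
  case (orR1 G x y)
  then show ?case by (auto intro: deriv.orR1)
next
  case (orR2 G x y)
  then show ?case by (auto intro: deriv.orR2)
next
  case (orL x G phi y)
  show ?case
  proof (cases "Or x y = Or a b")
    case True then show ?thesis using orL by auto
  next
    case False
    have m: "Or a b \<in># G" using orL False by auto
  have 1: "deriv S (add_mset a (add_mset x G - {#Or a b#})) phi" using orL.IH m by simp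
  have 2: "deriv S (add_mset a (add_mset y G - {#Or a b#})) phi" using orL.IH m by simp
  show ?thesis
      apply (rule orL_m[of x y])
      using 1 2 False by (simp_all add: m add_mset_commute)
  qed
next
  case (n x y G)
  have m: "Or a b \<in># G" using n by auto
  have 1: "deriv S (add_mset a (add_mset (Neg x) (add_mset y G) - {#Or a b#})) x" using n.IH m by simp
  have 2: "deriv S (add_mset a (add_mset (Neg x) (add_mset x G) - {#Or a b#})) y" using n.IH m by simp
  show ?case
      apply (rule n_m[of x])
      using 1 2 n.hyps by (simp_all add: m add_mset_commute)
next
  case (nef x G y)
  have m: "Or a b \<in># G" using nef by auto
  have 1: "deriv S (add_mset a (add_mset (Neg x) G - {#Or a b#})) x" using nef.IH m by simp
  show ?case
      apply (rule nef_m[of x])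
      using 1 nef.hyps by (simp_all add: m add_mset_commute)
next
  case (copc x y G)
  have m: "Or a b \<in># G" using copc by auto
  have 1: "deriv S (add_mset a (add_mset (Neg x) (add_mset y G) - {#Or a b#})) x" using copc.IH m by simp
  show ?case
      apply (rule copc_m[of x])
      using 1 copc.hyps by (simp_all add: m add_mset_commute)
next
  case (an x G)
  have m: "Or a b \<in># G" using an.prems by simp
  have "deriv S (add_mset a (add_mset x G - {#Or a b#})) (Neg x)" using an.IH m by simp
  then have "deriv S (add_mset x (add_mset a (G - {#Or a b#}))) (Neg x)" by (simp add: m add_mset_commute)
  then show ?case using an.hyps by (rule_tac deriv.an)
qed

lemma inv_or2: "deriv S M C \<Longrightarrow> Or a b \<in># M \<Longrightarrow> deriv S (add_mset b (M - {#Or a b#})) C"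
proof (induction rule: deriv.induct)
  case (ax p G)
  then show ?case by (auto intro: ax_m)
next
  case (top G)
  then show ?case by (auto intro: deriv.top)
next
  case (impR x G y)
  have m: "Or a b \<in># G" using impR.prems by simp
  have "deriv S (add_mset b (add_mset x G - {#Or a b#})) y" using impR.IH m by simp
  then have "deriv S (add_mset x (add_mset b (G - {#Or a b#}))) y" by (simp add: m add_mset_commute)
  then show ?case by (rule deriv.impR)
next
  case (impL x y G phi)
  have False: "Imp x y \<noteq> Or a b" by simp
  have m: "Or a b \<in># G" using impL False by auto
    have 1: "deriv S (add_mset b (add_mset (Imp x y) G - {#Or a b#})) x" using impL.IH(1) m by simp
    have 2: "deriv S (add_mset b (add_mset y G - {#Or a b#})) phi" using impL.IH(2) m by simp
    show ?case
      apply (rule impL_m[of x y])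
      using 1 2 False by (simp_all add: m add_mset_commute)
next
  case (andR G x y)
  then show ?case by (auto intro: deriv.andR)
next
  case (andL x y G phi)
  have False: "And x y \<noteq> Or a b" by simp
  have m: "Or a b \<in># G" using andL False by auto
  have 1: "deriv S (add_mset b (add_mset x (add_mset y G) - {#Or a b#})) phi" using andL.IH m by simp
  show ?case
      apply (rule andL_m[of x y])
      using 1 False by (simp_all add: m add_mset_commute)
next
  case (orR1 G x y)
  then show ?case by (auto intro: deriv.orR1)
next
  case (orR2 G x y)
  then show ?case by (auto intro: deriv.orR2)
next
  case (orL x G phi y)
  show ?case
  proof (cases "Or x y = Or a b")
    case True then show ?thesis using orL by auto
  next
    case False
    have m: "Or a b \<in># G" using orL False by auto
  have 1: "deriv S (add_mset b (add_mset x G - {#Or a b#})) phi" using orL.IH m by simp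
  have 2: "deriv S (add_mset b (add_mset y G - {#Or a b#})) phi" using orL.IH m by simp
  show ?thesis
      apply (rule orL_m[of x y])
      using 1 2 False by (simp_all add: m add_mset_commute)
  qed
next
  case (n x y G)
  have m: "Or a b \<in># G" using n by auto
  have 1: "deriv S (add_mset b (add_mset (Neg x) (add_mset y G) - {#Or a b#})) x" using n.IH m by simp
  have 2: "deriv S (add_mset b (add_mset (Neg x) (add_mset x G) - {#Or a b#})) y" using n.IH m by simp
  show ?case
      apply (rule n_m[of x])
      using 1 2 n.hyps by (simp_all add: m add_mset_commute)
next
  case (nef x G y)
  have m: "Or a b \<in># G" using nef by auto
  have 1: "deriv S (add_mset b (add_mset (Neg x) G - {#Or a b#})) x" using nef.IH m by simp
  show ?case
      apply (rule nef_m[of x])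
      using 1 nef.hyps by (simp_all add: m add_mset_commute)
next
  case (copc x y G)
  have m: "Or a b \<in># G" using copc by auto
  have 1: "deriv S (add_mset b (add_mset (Neg x) (add_mset y G) - {#Or a b#})) x" using copc.IH m by simp
  show ?case
      apply (rule copc_m[of x])
      using 1 copc.hyps by (simp_all add: m add_mset_commute)
next
  case (an x G)
  have m: "Or a b \<in># G" using an.prems by simp
  have "deriv S (add_mset b (add_mset x G - {#Or a b#})) (Neg x)" using an.IH m by simp
  then have "deriv S (add_mset x (add_mset b (G - {#Or a b#}))) (Neg x)" by (simp add: m add_mset_commute)
  then show ?case using an.hyps by (rule_tac deriv.an)
qed

lemma ident: "deriv S (add_mset A G) A"
proof (induction A arbitrary: G)
  case (Var x) then show ?case by (rule deriv.ax)
next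
  case Top then show ?case by (rule deriv.top)
next
  case (And A1 A2)
  have "deriv S (add_mset A1 (add_mset A2 G)) A1" using And(1) .
  moreover have "deriv S (add_mset A1 (add_mset A2 G)) A2" using And(2)[of "add_mset A1 G"]
    by (simp add: add_mset_commute)
  ultimately show ?case by (auto intro: deriv.andR deriv.andL)
next
  case (Or A1 A2)
  have "deriv S (add_mset A1 G) (Or A1 A2)" using Or(1) by (rule deriv.orR1)
  moreover have "deriv S (add_mset A2 G) (Or A1 A2)" using Or(2) by (rule deriv.orR2)
  ultimately show ?case by (rule deriv.orL)
next
  case (Imp A1 A2)
  have "deriv S (add_mset (Imp A1 A2) (add_mset A1 G)) A1" using Imp(1)[of "add_mset (Imp A1 A2) G"]
    by (simp add: add_mset_commute)
  moreover have "deriv S (add_mset A2 (add_mset A1 G)) A2" using Imp(2) .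
  ultimately have "deriv S (add_mset (Imp A1 A2) (add_mset A1 G)) A2" by (rule deriv.impL)
  then show ?case by (intro deriv.impR) (simp add: add_mset_commute)
next
  case (Neg A)
  have h: "deriv S (add_mset (Neg A) (add_mset A G)) A" using Neg[of "add_mset (Neg A) G"]
    by (simp add: add_mset_commute)
  show ?case
  proof (cases "has_n S")
    case True then show ?thesis using h by (auto intro: deriv.n)
  next
    case False then have "has_copc S" by (cases S) (auto simp: has_n_def has_copc_def)
    then show ?thesis using h by (auto intro: deriv.copc)
  qed
qed

lemma inv_andR: "deriv S M X \<Longrightarrow> X = And a b \<Longrightarrow> deriv S M a \<and> deriv S M b"
proof (induction rule: deriv.induct)
  case (impL x y G phi) then show ?case by (auto intro: deriv.impL)
next
  case (andL x y G phi) then show ?case by (auto intro: deriv.andL)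
next
  case (orL x G phi y) then show ?case by (auto intro: deriv.orL)
qed auto

lemma inv_impR: "deriv S M X \<Longrightarrow> X = Imp a b \<Longrightarrow> deriv S (add_mset a M) b"
proof (induction rule: deriv.induct)
  case (impL x y G phi)
  have 1: "deriv S (add_mset (Imp x y) (add_mset a G)) x" using wk1[OF impL.hyps(1), of a] by (simp add: add_mset_commute)
  have 2: "deriv S (add_mset y (add_mset a G)) b" using impL by (simp add: add_mset_commute)
  show ?case using deriv.impL[OF 1 2] by (simp add: add_mset_commute)
next
  case (andL x y G phi)
  have 2: "deriv S (add_mset x (add_mset y (add_mset a G))) b" using andL by (simp add: add_mset_commute)
  show ?case using deriv.andL[OF 2] by (simp add: add_mset_commute)
next
  case (orL x G phi y)
  have 1: "deriv S (add_mset x (add_mset a G)) b" using orL by (simp add: add_mset_commute)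
  have 2: "deriv S (add_mset y (add_mset a G)) b" using orL by (simp add: add_mset_commute)
  show ?case using deriv.orL[OF 1 2] by (simp add: add_mset_commute)
qed auto

definition cutp :: "sys \<Rightarrow> fm \<Rightarrow> bool" where
  "cutp S B \<longleftrightarrow> (\<forall>G C. deriv S G B \<longrightarrow> deriv S (add_mset B G) C \<longrightarrow> deriv S G C)"

lemma cutD: "cutp S B \<Longrightarrow> deriv S G B \<Longrightarrow> deriv S (add_mset B G) C \<Longrightarrow> deriv S G C"
  unfolding cutp_def by blast

lemma or_lemma:
  assumes ca: "cutp S a" and cb: "cutp S b"
  shows "deriv S M X \<Longrightarrow> X = Or a b \<Longrightarrow> deriv S (add_mset a M) C \<Longrightarrow> deriv S (add_mset b M) C \<Longrightarrow> deriv S M C"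
proof (induction rule: deriv.induct)
  case (orR1 G x y) then show ?case using cutD[OF ca] by auto
next
  case (orR2 G x y) then show ?case using cutD[OF cb] by auto
next
  case (impL x y G phi)
  have 1: "deriv S (add_mset a (add_mset y G)) C"
    using inv_imp[OF impL.prems(2), of x y] by (simp add: add_mset_commute)
  have 2: "deriv S (add_mset b (add_mset y G)) C"
    using inv_imp[OF impL.prems(3), of x y] by (simp add: add_mset_commute)
  show ?case using impL 1 2 by (auto intro: deriv.impL)
next
  case (andL x y G phi)
  have 1: "deriv S (add_mset a (add_mset x (add_mset y G))) C"
    using inv_and[OF andL.prems(2), of x y] by (simp add: add_mset_commute)
  have 2: "deriv S (add_mset b (add_mset x (add_mset y G))) C"
    using inv_and[OF andL.prems(3), of x y] by (simp add: add_mset_commute)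
  show ?case using andL 1 2 by (auto intro: deriv.andL)
next
  case (orL x G phi y)
  have 1: "deriv S (add_mset a (add_mset x G)) C"
    using inv_or1[OF orL.prems(2), of x y] by (simp add: add_mset_commute)
  have 2: "deriv S (add_mset b (add_mset x G)) C"
    using inv_or1[OF orL.prems(3), of x y] by (simp add: add_mset_commute)
  have 3: "deriv S (add_mset a (add_mset y G)) C"
    using inv_or2[OF orL.prems(2), of x y] by (simp add: add_mset_commute)
  have 4: "deriv S (add_mset b (add_mset y G)) C"
    using inv_or2[OF orL.prems(3), of x y] by (simp add: add_mset_commute)
  show ?case using orL 1 2 3 4 by (auto intro: deriv.orL)
qed auto

lemma sys_facts: "has_n S \<Longrightarrow> \<not> has_copc S" "has_n S \<Longrightarrow> \<not> has_an S" "has_nef S \<Longrightarrow> \<not> has_copc S"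
  "has_nef S \<Longrightarrow> \<not> has_an S" "has_nef S \<Longrightarrow> has_n S"
  by (cases S; simp add: has_n_def has_copc_def has_an_def has_nef_def)+

lemma neg_n:
  assumes hn: "has_n S" and cb: "cutp S b"
  shows "deriv S M X \<Longrightarrow> X = Neg b \<Longrightarrow> deriv S (add_mset d M) b \<Longrightarrow> deriv S (add_mset b M) d \<Longrightarrow> deriv S M (Neg d)"
proof (induction rule: deriv.induct)
  case (impL x y G phi)
  have 1: "deriv S (add_mset d (add_mset y G)) b"
    using inv_imp[OF impL.prems(2), of x y] by (simp add: add_mset_commute)
  have 2: "deriv S (add_mset b (add_mset y G)) d"
    using inv_imp[OF impL.prems(3), of x y] by (simp add: add_mset_commute)
  show ?case using impL 1 2 by (auto intro: deriv.impL)
next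
  case (andL x y G phi)
  have 1: "deriv S (add_mset d (add_mset x (add_mset y G))) b"
    using inv_and[OF andL.prems(2), of x y] by (simp add: add_mset_commute)
  have 2: "deriv S (add_mset b (add_mset x (add_mset y G))) d"
    using inv_and[OF andL.prems(3), of x y] by (simp add: add_mset_commute)
  show ?case using andL 1 2 by (auto intro: deriv.andL)
next
  case (orL x G phi y)
  have 1: "deriv S (add_mset d (add_mset x G)) b"
    using inv_or1[OF orL.prems(2), of x y] by (simp add: add_mset_commute)
  have 2: "deriv S (add_mset b (add_mset x G)) d"
    using inv_or1[OF orL.prems(3), of x y] by (simp add: add_mset_commute)
  have 3: "deriv S (add_mset d (add_mset y G)) b"
    using inv_or2[OF orL.prems(2), of x y] by (simp add: add_mset_commute)
  have 4: "deriv S (add_mset b (add_mset y G)) d"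
    using inv_or2[OF orL.prems(3), of x y] by (simp add: add_mset_commute)
  show ?case using orL 1 2 3 4 by (auto intro: deriv.orL)
next
  case (n x y G)
  then have yb: "y = b" by simp
  have p1: "deriv S (add_mset b (add_mset (Neg x) (add_mset d G))) x"
    using wk1[OF n.hyps(2), of d] yb by (simp add: add_mset_commute)
  have l1: "deriv S (add_mset (Neg x) (add_mset d G)) b" using n.prems(2) by (simp add: add_mset_commute)
  have q1: "deriv S (add_mset (Neg x) (add_mset d G)) x" by (rule cutD[OF cb l1 p1])
  have l2: "deriv S (add_mset (Neg x) (add_mset x G)) b" using n.hyps(3) yb by simp
  have p2: "deriv S (add_mset b (add_mset (Neg x) (add_mset x G))) d"
    using wk1[OF n.prems(3), of x] by (simp add: add_mset_commute)
  have q2: "deriv S (add_mset (Neg x) (add_mset x G)) d" by (rule cutD[OF cb l2 p2])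
  show ?case by (rule deriv.n[OF hn q1 q2])
next
  case (nef x G y) then show ?case by (auto intro: deriv.nef)
next
  case (copc x y G) then show ?case using sys_facts hn by auto
next
  case (an x G) then show ?case using sys_facts hn by auto
qed auto

lemma neg_nef:
  assumes hn: "has_nef S" and cb: "cutp S b"
  shows "deriv S M X \<Longrightarrow> X = Neg b \<Longrightarrow> deriv S M b \<Longrightarrow> deriv S M (Neg d)"
proof (induction rule: deriv.induct)
  case (impL x y G phi)
  have 1: "deriv S (add_mset y G) b"
    using inv_imp[OF impL.prems(2), of x y] by (simp add: add_mset_commute)
  show ?case using impL 1 by (auto intro: deriv.impL)
next
  case (andL x y G phi)
  have 1: "deriv S (add_mset x (add_mset y G)) b"
    using inv_and[OF andL.prems(2), of x y] by (simp add: add_mset_commute)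
  show ?case using andL 1 by (auto intro: deriv.andL)
next
  case (orL x G phi y)
  have 1: "deriv S (add_mset x G) b"
    using inv_or1[OF orL.prems(2), of x y] by (simp add: add_mset_commute)
  have 3: "deriv S (add_mset y G) b"
    using inv_or2[OF orL.prems(2), of x y] by (simp add: add_mset_commute)
  show ?case using orL 1 3 by (auto intro: deriv.orL)
next
  case (n x y G)
  then have yb: "y = b" by simp
  have p1: "deriv S (add_mset b (add_mset (Neg x) G)) x"
    using n.hyps(2) yb by (simp add: add_mset_commute)
  have q1: "deriv S (add_mset (Neg x) G) x" by (rule cutD[OF cb n.prems(2) p1])
  show ?case by (rule deriv.nef[OF hn q1])
next
  case (nef x G y) then show ?case by (auto intro: deriv.nef)
next
  case (copc x y G) then show ?case using sys_facts hn by auto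
next
  case (an x G) then show ?case using sys_facts hn by auto
qed auto

lemma neg_copc:
  assumes hc: "has_copc S" and cb: "cutp S b"
  shows "deriv S M X \<Longrightarrow> X = Neg b \<Longrightarrow> deriv S (add_mset d M) b \<Longrightarrow> deriv S M (Neg d)"
proof (induction arbitrary: d rule: deriv.induct)
  case (impL x y G phi)
  have 1: "deriv S (add_mset d (add_mset y G)) b"
    using inv_imp[OF impL.prems(2), of x y] by (simp add: add_mset_commute)
  show ?case using impL 1 by (auto intro: deriv.impL)
next
  case (andL x y G phi)
  have 1: "deriv S (add_mset d (add_mset x (add_mset y G))) b"
    using inv_and[OF andL.prems(2), of x y] by (simp add: add_mset_commute)
  show ?case using andL 1 by (auto intro: deriv.andL)
next
  case (orL x G phi y)
  have 1: "deriv S (add_mset d (add_mset x G)) b"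
    using inv_or1[OF orL.prems(2), of x y] by (simp add: add_mset_commute)
  have 3: "deriv S (add_mset d (add_mset y G)) b"
    using inv_or2[OF orL.prems(2), of x y] by (simp add: add_mset_commute)
  show ?case using orL 1 3 by (auto intro: deriv.orL)
next
  case (copc x y G)
  then have yb: "y = b" by simp
  have p1: "deriv S (add_mset b (add_mset (Neg x) (add_mset d G))) x"
    using wk1[OF copc.hyps(2), of d] yb by (simp add: add_mset_commute)
  have l1: "deriv S (add_mset (Neg x) (add_mset d G)) b" using copc.prems(2) by (simp add: add_mset_commute)
  have q1: "deriv S (add_mset (Neg x) (add_mset d G)) x" by (rule cutD[OF cb l1 p1])
  show ?case by (rule deriv.copc[OF hc q1])
next
  case (an x G)
  then have xb: "x = b" by simp
  have w: "deriv S (add_mset d (add_mset b G)) b" using wk1[OF an.prems(2), of b] by (simp add: add_mset_commute)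
  have 1: "deriv S (add_mset b G) (Neg d)" using an.IH[of d] w xb by simp
  have 2: "deriv S (add_mset b (add_mset d G)) (Neg d)" using wk1[OF 1, of d] by (simp add: add_mset_commute)
  have 3: "deriv S (add_mset d G) (Neg d)" by (rule cutD[OF cb an.prems(2) 2])
  show ?case using an.hyps(1) 3 by (rule deriv.an)
next
  case (n x y G) then show ?case using sys_facts hc by auto
next
  case (nef x G y) then show ?case using sys_facts hc by auto
qed auto

lemma cut_step:
  assumes sub: "\<And>B. size B < size A \<Longrightarrow> cutp S B"
  shows "deriv S M C \<Longrightarrow> A \<in># M \<Longrightarrow> deriv S (M - {#A#}) A \<Longrightarrow> deriv S (M - {#A#}) C"
proof (induction rule: deriv.induct)
  case (ax p G)
  show ?case
  proof (cases "Var p = A")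
    case True then show ?thesis using ax by simp
  next
    case False then show ?thesis using ax by (auto intro: ax_m)
  qed
next
  case (top G) show ?case by (rule deriv.top)
next
  case (impR x G y)
  have m: "A \<in># G" using impR.prems by simp
  have "deriv S (add_mset x G - {#A#}) A" using wk1[OF impR.prems(2), of x] m by simp
  then have "deriv S (add_mset x G - {#A#}) y" using impR.IH m by simp
  then show ?case using m by (auto intro: deriv.impR)
next
  case (impL x y G phi)
  show ?case
  proof (cases "Imp x y = A")
    case True
    have D1: "deriv S G (Imp x y)" using impL.prems True by simp
    have h1: "deriv S G x" using impL.IH(1) impL.prems True by simp
    have h2: "deriv S (add_mset x G) y" using inv_impR[OF D1 refl] .
    have h3: "deriv S G y" using cutD[OF sub h1 h2] True by auto
    have h4: "deriv S G phi" using cutD[OF sub h3 impL.hyps(2)] True by auto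
    then show ?thesis using True by simp
  next
    case False
    have m: "A \<in># G" using impL.prems False by auto
    have D1: "deriv S (add_mset (Imp x y) (G - {#A#})) A" using impL.prems m by simp
    have h1: "deriv S (add_mset (Imp x y) G - {#A#}) x" using impL.IH(1) impL.prems by simp
    have D1': "deriv S (add_mset y (G - {#A#})) A" using inv_imp[OF D1, of x y] by simp
    have h2: "deriv S (add_mset y G - {#A#}) phi" using impL.IH(2) D1' m by simp
    show ?thesis
      apply (rule impL_m[of x y])
      using h1 h2 m False by simp_all
  qed
next
  case (andR G x y) then show ?case by (auto intro: deriv.andR)
next
  case (andL x y G phi)
  show ?case
  proof (cases "And x y = A")
    case True
    have D1: "deriv S G (And x y)" using andL.prems True by simp
    have h1: "deriv S G x" "deriv S G y" using inv_andR[OF D1 refl] by auto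
    have h2: "deriv S (add_mset y G) x" using wk1[OF h1(1)] .
    have h3: "deriv S (add_mset y G) phi" using cutD[OF sub h2 andL.hyps(1)] True by auto
    have h4: "deriv S G phi" using cutD[OF sub h1(2) h3] True by auto
    then show ?thesis using True by simp
  next
    case False
    have m: "A \<in># G" using andL.prems False by auto
    have D1: "deriv S (add_mset (And x y) (G - {#A#})) A" using andL.prems m by simp
    have D1': "deriv S (add_mset x (add_mset y (G - {#A#}))) A" using inv_and[OF D1, of x y] by simp
    have h2: "deriv S (add_mset x (add_mset y G) - {#A#}) phi" using andL.IH D1' m by simp
    show ?thesis
      apply (rule andL_m[of x y])
      using h2 m False by simp_all
  qed
next
  case (orR1 G x y) then show ?case by (auto intro: deriv.orR1)
next
  case (orR2 G x y) then show ?case by (auto intro: deriv.orR2)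
next
  case (orL x G phi y)
  show ?case
  proof (cases "Or x y = A")
    case True
    have D1: "deriv S G (Or x y)" using orL.prems True by simp
    have "deriv S G phi" using or_lemma[OF sub sub D1 refl orL.hyps(1) orL.hyps(2)] True by auto
    then show ?thesis using True by simp
  next
    case False
    have m: "A \<in># G" using orL.prems False by auto
    have D1: "deriv S (add_mset (Or x y) (G - {#A#})) A" using orL.prems m by simp
    have D1': "deriv S (add_mset x (G - {#A#})) A" using inv_or1[OF D1, of x y] by simp
    have D1'': "deriv S (add_mset y (G - {#A#})) A" using inv_or2[OF D1, of x y] by simp
    have h1: "deriv S (add_mset x G - {#A#}) phi" using orL.IH D1' m by simp
    have h2: "deriv S (add_mset y G - {#A#}) phi" using orL.IH D1'' m by simp
    show ?thesis
      apply (rule orL_m[of x y])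
      using h1 h2 m False by simp_all
  qed
next
  case (n x y G)
  show ?case
  proof (cases "Neg x = A")
    case True
    have D1: "deriv S G (Neg x)" using n.prems True by simp
    have h1: "deriv S (add_mset y G) x" using n.IH(1) wk1[OF D1, of y] True by simp
    have h2: "deriv S (add_mset x G) y" using n.IH(2) wk1[OF D1, of x] True by simp
    have "deriv S G (Neg y)" using neg_n[OF n.hyps(1) sub D1 refl h1 h2] True by auto
    then show ?thesis using True by simp
  next
    case False
    have m: "A \<in># G" using n.prems False by auto
    have h1: "deriv S (add_mset (Neg x) (add_mset y G) - {#A#}) x"
      using n.IH(1) wk1[OF n.prems(2), of y] m by (simp add: add_mset_commute)
    have h2: "deriv S (add_mset (Neg x) (add_mset x G) - {#A#}) y"
      using n.IH(2) wk1[OF n.prems(2), of x] m by (simp add: add_mset_commute)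
    show ?thesis
      apply (rule n_m[of x])
      using h1 h2 m False n.hyps(1) by (simp_all add: add_mset_commute)
  qed
next
  case (nef x G y)
  show ?case
  proof (cases "Neg x = A")
    case True
    have D1: "deriv S G (Neg x)" using nef.prems True by simp
    have h1: "deriv S G x" using nef.IH D1 True by simp
    have "deriv S G (Neg y)" using neg_nef[OF nef.hyps(1) sub D1 refl h1] True by auto
    then show ?thesis using True by simp
  next
    case False
    have m: "A \<in># G" using nef.prems False by auto
    have h1: "deriv S (add_mset (Neg x) G - {#A#}) x"
      using nef.IH nef.prems m by simp
    show ?thesis
      apply (rule nef_m[of x])
      using h1 m False nef.hyps(1) by (simp_all add: add_mset_commute)
  qed
next
  case (copc x y G)
  show ?case
  proof (cases "Neg x = A")
    case True
    have D1: "deriv S G (Neg x)" using copc.prems True by simp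
    have h1: "deriv S (add_mset y G) x" using copc.IH(1) wk1[OF D1, of y] True by simp
    have "deriv S G (Neg y)" using neg_copc[OF copc.hyps(1) sub D1 refl h1] True by auto
    then show ?thesis using True by simp
  next
    case False
    have m: "A \<in># G" using copc.prems False by auto
    have h1: "deriv S (add_mset (Neg x) (add_mset y G) - {#A#}) x"
      using copc.IH(1) wk1[OF copc.prems(2), of y] m by (simp add: add_mset_commute)
    show ?thesis
      apply (rule copc_m[of x])
      using h1 m False copc.hyps(1) by (simp_all add: add_mset_commute)
  qed
next
  case (an x G)
  have m: "A \<in># G" using an.prems by simp
  have "deriv S (add_mset x G - {#A#}) A" using wk1[OF an.prems(2), of x] m by simp
  then have "deriv S (add_mset x G - {#A#}) (Neg x)" using an.IH m by simp
  then show ?case using m an.hyps(1) by (auto intro: deriv.an)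
qed

lemma cut_all: "cutp S A"
proof (induction A rule: measure_induct_rule[where f=size])
  case (less A)
  show ?case unfolding cutp_def
  proof (intro allI impI)
    fix G C assume "deriv S G A" "deriv S (add_mset A G) C"
    moreover have "\<And>B. size B < size A \<Longrightarrow> cutp S B" using less by blast
    ultimately show "deriv S G C" using cut_step[where A=A and S=S and M="add_mset A G" and C=C] by simp
  qed
qed

lemma cut: "deriv S G A \<Longrightarrow> deriv S (add_mset A G) C \<Longrightarrow> deriv S G C"
  using cutD[OF cut_all] .

lemma mvars_add[simp]: "mvars (add_mset x M) = vars x \<union> mvars M" by (simp add: mvars_def)
lemma mvars_plus[simp]: "mvars (A + B) = mvars A \<union> mvars B" by (simp add: mvars_def)

lemma msplit: "add_mset P G0 = G + D \<Longrightarrow>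
  (\<exists>G'. G = add_mset P G' \<and> G0 = G' + D) \<or> (\<exists>D'. D = add_mset P D' \<and> G0 = G + D')"
proof -
  assume h: "add_mset P G0 = G + D"
  have "P \<in># add_mset P G0" by simp
  then have mem: "P \<in># G + D" using h by simp
  show ?thesis
  proof (cases "P \<in># G")
    case True
    then obtain G' where g: "G = add_mset P G'" by (blast dest: multi_member_split)
    then have "G0 = G' + D" using h by simp
    then show ?thesis using g by blast
  next
    case False
    then have "P \<in># D" using mem by simp
    then obtain D' where d: "D = add_mset P D'" by (blast dest: multi_member_split)
    then have "G0 = G + D'" using h by simp
    then show ?thesis using d by blast
  qed
qed

definition ip :: "sys \<Rightarrow> fm multiset \<Rightarrow> fm multiset \<Rightarrow> fm \<Rightarrow> bool" where
  "ip S G D C \<longleftrightarrow> (\<exists>s. vars s \<subseteq> mvars G \<inter> (mvars D \<union> vars C) \<and> deriv S G s \<and> deriv S (add_mset s D) C)"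

lemma ipI: "vars s \<subseteq> mvars G \<inter> (mvars D \<union> vars C) \<Longrightarrow> deriv S G s \<Longrightarrow> deriv S (add_mset s D) C \<Longrightarrow> ip S G D C"
  unfolding ip_def by blast

lemma interp: "deriv S M C \<Longrightarrow> M = G + D \<Longrightarrow> ip S G D C"
proof (induction arbitrary: G D rule: deriv.induct)
  case (ax p G0)
  from msplit[OF ax] show ?case
  proof
    assume "\<exists>G'. G = add_mset (Var p) G' \<and> G0 = G' + D"
    then obtain G' where g: "G = add_mset (Var p) G'" by blast
    show ?case by (rule ipI[of "Var p"]) (auto simp: g intro: deriv.ax)
  next
    assume "\<exists>D'. D = add_mset (Var p) D' \<and> G0 = G + D'"
    then obtain D' where d: "D = add_mset (Var p) D'" by blast
    show ?case by (rule ipI[of Top]) (auto simp: d intro: deriv.top ax_m)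
  qed
next
  case (top G0)
  show ?case by (rule ipI[of Top]) (auto intro: deriv.top)
next
  case (impR x G0 y)
  obtain s where s: "vars s \<subseteq> mvars G \<inter> (mvars (add_mset x D) \<union> vars y)" "deriv S G s"
    "deriv S (add_mset s (add_mset x D)) y"
    using impR.IH[of G "add_mset x D"] impR.prems unfolding ip_def by auto
  have "deriv S (add_mset x (add_mset s D)) y" using s(3) by (simp add: add_mset_commute)
  then have "deriv S (add_mset s D) (Imp x y)" by (rule deriv.impR)
  then show ?case using s by (intro ipI[of s]) auto
next
  case (impL x y G0 phi)
  from msplit[OF impL.prems] show ?case
  proof
    assume "\<exists>G'. G = add_mset (Imp x y) G' \<and> G0 = G' + D"
    then obtain G' where g: "G = add_mset (Imp x y) G'" "G0 = G' + D" by blast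
    obtain s1 where s1: "vars s1 \<subseteq> mvars D \<inter> (mvars (add_mset (Imp x y) G') \<union> vars x)" "deriv S D s1"
      "deriv S (add_mset s1 (add_mset (Imp x y) G')) x"
      using impL.IH(1)[of D "add_mset (Imp x y) G'"] g unfolding ip_def by (auto simp: union_commute)
    obtain s2 where s2: "vars s2 \<subseteq> mvars (add_mset y G') \<inter> (mvars D \<union> vars phi)" "deriv S (add_mset y G') s2"
      "deriv S (add_mset s2 D) phi"
      using impL.IH(2)[of "add_mset y G'" D] g unfolding ip_def by auto
    have a1: "deriv S (add_mset (Imp x y) (add_mset s1 G')) x" using s1(3) by (simp add: add_mset_commute)
    have a2: "deriv S (add_mset y (add_mset s1 G')) s2" using wk1[OF s2(2), of s1] by (simp add: add_mset_commute)
    have "deriv S (add_mset (Imp x y) (add_mset s1 G')) s2" by (rule deriv.impL[OF a1 a2])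
    then have "deriv S (add_mset s1 G) s2" by (simp add: g add_mset_commute)
    then have L: "deriv S G (Imp s1 s2)" by (rule deriv.impR)
    have b1: "deriv S (add_mset (Imp s1 s2) D) s1" using wk1[OF s1(2)] .
    have R: "deriv S (add_mset (Imp s1 s2) D) phi" by (rule deriv.impL[OF b1 s2(3)])
    show ?case by (rule ipI[OF _ L R]) (use s1(1) s2(1) g in auto)
  next
    assume "\<exists>D'. D = add_mset (Imp x y) D' \<and> G0 = G + D'"
    then obtain D' where d: "D = add_mset (Imp x y) D'" "G0 = G + D'" by blast
    obtain s1 where s1: "vars s1 \<subseteq> mvars G \<inter> (mvars (add_mset (Imp x y) D') \<union> vars x)" "deriv S G s1"
      "deriv S (add_mset s1 (add_mset (Imp x y) D')) x"
      using impL.IH(1)[of G "add_mset (Imp x y) D'"] d unfolding ip_def by auto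
    obtain s2 where s2: "vars s2 \<subseteq> mvars G \<inter> (mvars (add_mset y D') \<union> vars phi)" "deriv S G s2"
      "deriv S (add_mset s2 (add_mset y D')) phi"
      using impL.IH(2)[of G "add_mset y D'"] d unfolding ip_def by auto
    have L: "deriv S G (And s1 s2)" using s1(2) s2(2) by (rule deriv.andR)
    have a1: "deriv S (add_mset (Imp x y) (add_mset s1 (add_mset s2 D'))) x"
      using wk1[OF s1(3), of s2] by (simp add: add_mset_commute)
    have a2: "deriv S (add_mset y (add_mset s1 (add_mset s2 D'))) phi"
      using wk1[OF s2(3), of s1] by (simp add: add_mset_commute)
    have "deriv S (add_mset (Imp x y) (add_mset s1 (add_mset s2 D'))) phi" by (rule deriv.impL[OF a1 a2])
    then have "deriv S (add_mset s1 (add_mset s2 D)) phi" by (simp add: d add_mset_commute)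
    then have R: "deriv S (add_mset (And s1 s2) D) phi" by (rule deriv.andL)
    show ?case by (rule ipI[OF _ L R]) (use s1(1) s2(1) d in auto)
  qed
next
  case (andR G0 x y)
  obtain s1 where s1: "vars s1 \<subseteq> mvars G \<inter> (mvars D \<union> vars x)" "deriv S G s1" "deriv S (add_mset s1 D) x"
    using andR.IH(1)[of G D] andR.prems unfolding ip_def by auto
  obtain s2 where s2: "vars s2 \<subseteq> mvars G \<inter> (mvars D \<union> vars y)" "deriv S G s2" "deriv S (add_mset s2 D) y"
    using andR.IH(2)[of G D] andR.prems unfolding ip_def by auto
  have L: "deriv S G (And s1 s2)" using s1(2) s2(2) by (rule deriv.andR)
  have a1: "deriv S (add_mset s1 (add_mset s2 D)) x" using wk1[OF s1(3), of s2] by (simp add: add_mset_commute)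
  have a2: "deriv S (add_mset s1 (add_mset s2 D)) y" using wk1[OF s2(3), of s1] by (simp add: add_mset_commute)
  have R: "deriv S (add_mset (And s1 s2) D) (And x y)" by (rule deriv.andL, rule deriv.andR[OF a1 a2])
  show ?case by (rule ipI[OF _ L R]) (use s1(1) s2(1) in auto)
next
  case (andL x y G0 phi)
  from msplit[OF andL.prems] show ?case
  proof
    assume "\<exists>G'. G = add_mset (And x y) G' \<and> G0 = G' + D"
    then obtain G' where g: "G = add_mset (And x y) G'" "G0 = G' + D" by blast
    obtain s where s: "vars s \<subseteq> mvars (add_mset x (add_mset y G')) \<inter> (mvars D \<union> vars phi)"
      "deriv S (add_mset x (add_mset y G')) s" "deriv S (add_mset s D) phi"
      using andL.IH[of "add_mset x (add_mset y G')" D] g unfolding ip_def by auto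
    have L: "deriv S G s" unfolding g by (rule deriv.andL[OF s(2)])
    show ?case by (rule ipI[OF _ L s(3)]) (use s(1) g in auto)
  next
    assume "\<exists>D'. D = add_mset (And x y) D' \<and> G0 = G + D'"
    then obtain D' where d: "D = add_mset (And x y) D'" "G0 = G + D'" by blast
    obtain s where s: "vars s \<subseteq> mvars G \<inter> (mvars (add_mset x (add_mset y D')) \<union> vars phi)"
      "deriv S G s" "deriv S (add_mset s (add_mset x (add_mset y D'))) phi"
      using andL.IH[of G "add_mset x (add_mset y D')"] d unfolding ip_def by auto
    have "deriv S (add_mset x (add_mset y (add_mset s D'))) phi" using s(3) by (simp add: add_mset_commute)
    then have "deriv S (add_mset (And x y) (add_mset s D')) phi" by (rule deriv.andL)
    then have R: "deriv S (add_mset s D) phi" by (simp add: d add_mset_commute)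
    show ?case by (rule ipI[OF _ s(2) R]) (use s(1) d in auto)
  qed
next
  case (orR1 G0 x y)
  obtain s where s: "vars s \<subseteq> mvars G \<inter> (mvars D \<union> vars x)" "deriv S G s" "deriv S (add_mset s D) x"
    using orR1.IH[of G D] orR1.prems unfolding ip_def by auto
  show ?case by (rule ipI[OF _ s(2) deriv.orR1[OF s(3)]]) (use s(1) in auto)
next
  case (orR2 G0 y x)
  obtain s where s: "vars s \<subseteq> mvars G \<inter> (mvars D \<union> vars y)" "deriv S G s" "deriv S (add_mset s D) y"
    using orR2.IH[of G D] orR2.prems unfolding ip_def by auto
  show ?case by (rule ipI[OF _ s(2) deriv.orR2[OF s(3)]]) (use s(1) in auto)
next
  case (orL x G0 phi y)
  from msplit[OF orL.prems] show ?case
  proof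
    assume "\<exists>G'. G = add_mset (Or x y) G' \<and> G0 = G' + D"
    then obtain G' where g: "G = add_mset (Or x y) G'" "G0 = G' + D" by blast
    obtain s1 where s1: "vars s1 \<subseteq> mvars (add_mset x G') \<inter> (mvars D \<union> vars phi)"
      "deriv S (add_mset x G') s1" "deriv S (add_mset s1 D) phi"
      using orL.IH(1)[of "add_mset x G'" D] g unfolding ip_def by auto
    obtain s2 where s2: "vars s2 \<subseteq> mvars (add_mset y G') \<inter> (mvars D \<union> vars phi)"
      "deriv S (add_mset y G') s2" "deriv S (add_mset s2 D) phi"
      using orL.IH(2)[of "add_mset y G'" D] g unfolding ip_def by auto
    have L: "deriv S G (Or s1 s2)" unfolding g
      by (rule deriv.orL[OF deriv.orR1[OF s1(2)] deriv.orR2[OF s2(2)]])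
    have R: "deriv S (add_mset (Or s1 s2) D) phi" by (rule deriv.orL[OF s1(3) s2(3)])
    show ?case by (rule ipI[OF _ L R]) (use s1(1) s2(1) g in auto)
  next
    assume "\<exists>D'. D = add_mset (Or x y) D' \<and> G0 = G + D'"
    then obtain D' where d: "D = add_mset (Or x y) D'" "G0 = G + D'" by blast
    obtain s1 where s1: "vars s1 \<subseteq> mvars G \<inter> (mvars (add_mset x D') \<union> vars phi)" "deriv S G s1"
      "deriv S (add_mset s1 (add_mset x D')) phi"
      using orL.IH(1)[of G "add_mset x D'"] d unfolding ip_def by auto
    obtain s2 where s2: "vars s2 \<subseteq> mvars G \<inter> (mvars (add_mset y D') \<union> vars phi)" "deriv S G s2"
      "deriv S (add_mset s2 (add_mset y D')) phi"
      using orL.IH(2)[of G "add_mset y D'"] d unfolding ip_def by auto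
    have L: "deriv S G (And s1 s2)" using s1(2) s2(2) by (rule deriv.andR)
    have a1: "deriv S (add_mset x (add_mset s1 (add_mset s2 D'))) phi"
      using wk1[OF s1(3), of s2] by (simp add: add_mset_commute)
    have a2: "deriv S (add_mset y (add_mset s1 (add_mset s2 D'))) phi"
      using wk1[OF s2(3), of s1] by (simp add: add_mset_commute)
    have "deriv S (add_mset (Or x y) (add_mset s1 (add_mset s2 D'))) phi" by (rule deriv.orL[OF a1 a2])
    then have "deriv S (add_mset s1 (add_mset s2 D)) phi" by (simp add: d add_mset_commute)
    then have R: "deriv S (add_mset (And s1 s2) D) phi" by (rule deriv.andL)
    show ?case by (rule ipI[OF _ L R]) (use s1(1) s2(1) d in auto)
  qed
next
  case (n x y G0)
  from msplit[OF n.prems] show ?case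
  proof
    assume "\<exists>G'. G = add_mset (Neg x) G' \<and> G0 = G' + D"
    then obtain G' where g: "G = add_mset (Neg x) G'" "G0 = G' + D" by blast
    obtain s1 where s1: "vars s1 \<subseteq> mvars (add_mset y D) \<inter> (mvars G \<union> vars x)"
      "deriv S (add_mset y D) s1" "deriv S (add_mset s1 G) x"
      using n.IH(1)[of "add_mset y D" G] g unfolding ip_def by (auto simp: add_mset_commute union_commute)
    obtain s2 where s2: "vars s2 \<subseteq> mvars (add_mset x G) \<inter> (mvars D \<union> vars y)"
      "deriv S (add_mset x G) s2" "deriv S (add_mset s2 D) y"
      using n.IH(2)[of "add_mset x G" D] g unfolding ip_def by (auto simp: add_mset_commute)
    have c1: "deriv S (add_mset s1 G) s2"
      using cut[OF s1(3), of s2] wk1[OF s2(2), of s1] by (simp add: add_mset_commute)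
    have L1: "deriv S G (Imp s1 s2)" by (rule deriv.impR[OF c1])
    have e1: "deriv S (add_mset s1 (add_mset (Imp s2 s1) G)) x" using wk1[OF s1(3), of "Imp s2 s1"]
      by (simp add: add_mset_commute)
    have e2a: "deriv S (add_mset (Imp s2 s1) (add_mset x G)) s2" using wk1[OF s2(2)] .
    have e2b: "deriv S (add_mset s1 (add_mset x G)) s1" by (rule ident)
    have e2: "deriv S (add_mset x (add_mset (Imp s2 s1) G)) s1"
      using deriv.impL[OF e2a e2b] by (simp add: add_mset_commute)
    have "deriv S (add_mset (Imp s2 s1) G) (Neg s1)"
      by (rule n_m[OF _ n.hyps(1) e1 e2]) (simp add: g)
    then have L2: "deriv S G (Imp (Imp s2 s1) (Neg s1))" by (rule deriv.impR)
    have L: "deriv S G (And (Imp s1 s2) (Imp (Imp s2 s1) (Neg s1)))" by (rule deriv.andR[OF L1 L2])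
    have f1: "deriv S (add_mset s2 D) s1"
      using cut[OF s2(3), of s1] wk1[OF s1(2), of s2] by (simp add: add_mset_commute)
    have r1: "deriv S (add_mset (Imp (Imp s2 s1) (Neg s1)) (add_mset (Imp s1 s2) D)) (Imp s2 s1)"
      apply (rule deriv.impR)
      using wk1[OF wk1[OF f1, of "Imp s1 s2"], of "Imp (Imp s2 s1) (Neg s1)"] by (simp add: add_mset_commute)
    have q1: "deriv S (add_mset y (add_mset (Neg s1) (add_mset (Imp s1 s2) D))) s1"
      using wk1[OF wk1[OF s1(2), of "Neg s1"], of "Imp s1 s2"] by (simp add: add_mset_commute)
    have q2a: "deriv S (add_mset (Imp s1 s2) (add_mset s1 (add_mset (Neg s1) D))) s1" by (simp add: ident add_mset_commute)
    have q2b: "deriv S (add_mset s2 (add_mset s1 (add_mset (Neg s1) D))) y"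
      using wk1[OF wk1[OF s2(3), of "Neg s1"], of s1] by (simp add: add_mset_commute)
    have q2: "deriv S (add_mset s1 (add_mset (Neg s1) (add_mset (Imp s1 s2) D))) y"
      using deriv.impL[OF q2a q2b] by (simp add: add_mset_commute)
    have r2: "deriv S (add_mset (Neg s1) (add_mset (Imp s1 s2) D)) (Neg y)"
      by (rule n_m[OF _ n.hyps(1) q1 q2]) simp
    have "deriv S (add_mset (Imp (Imp s2 s1) (Neg s1)) (add_mset (Imp s1 s2) D)) (Neg y)"
      by (rule deriv.impL[OF r1 r2])
    then have "deriv S (add_mset (Imp s1 s2) (add_mset (Imp (Imp s2 s1) (Neg s1)) D)) (Neg y)"
      by (simp add: add_mset_commute)
    then have R: "deriv S (add_mset (And (Imp s1 s2) (Imp (Imp s2 s1) (Neg s1))) D) (Neg y)" by (rule deriv.andL)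
    show ?case by (rule ipI[OF _ L R]) (use s1(1) s2(1) g in auto)
  next
    assume "\<exists>D'. D = add_mset (Neg x) D' \<and> G0 = G + D'"
    then obtain D' where d: "D = add_mset (Neg x) D'" "G0 = G + D'" by blast
    obtain s1 where s1: "vars s1 \<subseteq> mvars G \<inter> (mvars (add_mset (Neg x) (add_mset y D')) \<union> vars x)" "deriv S G s1"
      "deriv S (add_mset s1 (add_mset (Neg x) (add_mset y D'))) x"
      using n.IH(1)[of G "add_mset (Neg x) (add_mset y D')"] d unfolding ip_def by auto
    obtain s2 where s2: "vars s2 \<subseteq> mvars G \<inter> (mvars (add_mset (Neg x) (add_mset x D')) \<union> vars y)" "deriv S G s2"
      "deriv S (add_mset s2 (add_mset (Neg x) (add_mset x D'))) y"
      using n.IH(2)[of G "add_mset (Neg x) (add_mset x D')"] d unfolding ip_def by auto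
    have L: "deriv S G (And s1 s2)" using s1(2) s2(2) by (rule deriv.andR)
    have a1: "deriv S (add_mset y (add_mset s1 (add_mset s2 D))) x"
      using wk1[OF s1(3), of s2] by (simp add: d add_mset_commute)
    have a2: "deriv S (add_mset x (add_mset s1 (add_mset s2 D))) y"
      using wk1[OF s2(3), of s1] by (simp add: d add_mset_commute)
    have "deriv S (add_mset s1 (add_mset s2 D)) (Neg y)"
      by (rule n_m[OF _ n.hyps(1) a1 a2]) (simp add: d)
    then have R: "deriv S (add_mset (And s1 s2) D) (Neg y)" by (rule deriv.andL)
    show ?case by (rule ipI[OF _ L R]) (use s1(1) s2(1) d in auto)
  qed
next
  case (nef x G0 y)
  from msplit[OF nef.prems] show ?case
  proof
    assume "\<exists>G'. G = add_mset (Neg x) G' \<and> G0 = G' + D"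
    then obtain G' where g: "G = add_mset (Neg x) G'" "G0 = G' + D" by blast
    obtain s1 where s1: "vars s1 \<subseteq> mvars D \<inter> (mvars G \<union> vars x)"
      "deriv S D s1" "deriv S (add_mset s1 G) x"
      using nef.IH[of D G] g unfolding ip_def by (auto simp: union_commute)
    have "deriv S (add_mset s1 G) (Neg Top)" by (rule nef_m[OF _ nef.hyps(1) s1(3)]) (simp add: g)
    then have L: "deriv S G (Imp s1 (Neg Top))" by (rule deriv.impR)
    have b: "deriv S (add_mset (Neg Top) D) (Neg y)" by (rule deriv.nef[OF nef.hyps(1) deriv.top])
    have R: "deriv S (add_mset (Imp s1 (Neg Top)) D) (Neg y)" by (rule deriv.impL[OF wk1[OF s1(2)] b])
    show ?case by (rule ipI[OF _ L R]) (use s1(1) g in auto)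
  next
    assume "\<exists>D'. D = add_mset (Neg x) D' \<and> G0 = G + D'"
    then obtain D' where d: "D = add_mset (Neg x) D'" "G0 = G + D'" by blast
    obtain s where s: "vars s \<subseteq> mvars G \<inter> (mvars D \<union> vars x)" "deriv S G s"
      "deriv S (add_mset s D) x"
      using nef.IH[of G D] d unfolding ip_def by auto
    have R: "deriv S (add_mset s D) (Neg y)" by (rule nef_m[OF _ nef.hyps(1) s(3)]) (simp add: d)
    show ?case by (rule ipI[OF _ s(2) R]) (use s(1) d in auto)
  qed
next
  case (copc x y G0)
  from msplit[OF copc.prems] show ?case
  proof
    assume "\<exists>G'. G = add_mset (Neg x) G' \<and> G0 = G' + D"
    then obtain G' where g: "G = add_mset (Neg x) G'" "G0 = G' + D" by blast
    obtain s1 where s1: "vars s1 \<subseteq> mvars (add_mset y D) \<inter> (mvars G \<union> vars x)"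
      "deriv S (add_mset y D) s1" "deriv S (add_mset s1 G) x"
      using copc.IH[of "add_mset y D" G] g unfolding ip_def by (auto simp: add_mset_commute union_commute)
    have L: "deriv S G (Neg s1)" by (rule copc_m[OF _ copc.hyps(1) s1(3)]) (simp add: g)
    have r1: "deriv S (add_mset y (add_mset (Neg s1) D)) s1"
      using wk1[OF s1(2), of "Neg s1"] by (simp add: add_mset_commute)
    have R: "deriv S (add_mset (Neg s1) D) (Neg y)" by (rule copc_m[OF _ copc.hyps(1) r1]) simp
    show ?case by (rule ipI[OF _ L R]) (use s1(1) g in auto)
  next
    assume "\<exists>D'. D = add_mset (Neg x) D' \<and> G0 = G + D'"
    then obtain D' where d: "D = add_mset (Neg x) D'" "G0 = G + D'" by blast
    obtain s where s: "vars s \<subseteq> mvars G \<inter> (mvars (add_mset (Neg x) (add_mset y D')) \<union> vars x)" "deriv S G s"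
      "deriv S (add_mset s (add_mset (Neg x) (add_mset y D'))) x"
      using copc.IH[of G "add_mset (Neg x) (add_mset y D')"] d unfolding ip_def by auto
    have a1: "deriv S (add_mset y (add_mset s D)) x" using s(3) by (simp add: d add_mset_commute)
    have R: "deriv S (add_mset s D) (Neg y)" by (rule copc_m[OF _ copc.hyps(1) a1]) (simp add: d)
    show ?case by (rule ipI[OF _ s(2) R]) (use s(1) d in auto)
  qed
next
  case (an x G0)
  obtain s where s: "vars s \<subseteq> mvars G \<inter> (mvars (add_mset x D) \<union> vars (Neg x))" "deriv S G s"
    "deriv S (add_mset s (add_mset x D)) (Neg x)"
    using an.IH[of G "add_mset x D"] an.prems unfolding ip_def by auto
  have "deriv S (add_mset x (add_mset s D)) (Neg x)" using s(3) by (simp add: add_mset_commute)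
  then have R: "deriv S (add_mset s D) (Neg x)" by (rule deriv.an[OF an.hyps(1)])
  show ?case by (rule ipI[OF _ s(2) R]) (use s(1) in auto)
qed

theorem theorem4p3:
  fixes S :: sys and G D :: "fm multiset" and phi :: fm
  assumes "common_lang G D phi \<noteq> {}"
    and "deriv S (G + D) phi"
  shows "\<exists>sigma. vars sigma \<subseteq> common_lang G D phi
           \<and> deriv S G sigma \<and> deriv S (add_mset sigma D) phi"
  using interp[OF assms(2) refl] unfolding ip_def common_lang_def by (auto simp: Un_commute)

end
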